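(* Let $(P,\leq)$ be a partially ordered set, $S(P):=\{(p,q)\in P^2: p\leq q,\ p\neq q\}$ its strict order, and $O(P)$ the lattice of suborders of $P$, i.e. the set of transitively closed subsets of $S(P)$ ordered by inclusion. Then $O(P)$ is order-scattered if and only if $S(P)$ is finite.
   Context: A poset is order-scattered if it contains no subset order-isomorphic to the chain $\mathbb{Q}$ of rationals. A subset $R\subseteq S(P)$ is transitively closed if $(a,b),(b,c)\in R$ imply $(a,c)\in R$. *)

theory Defs
  imports Complex_Main
begin

text \<open>A poset is given by a carrier P and a relation le with partial_order_on P le.\<close>

definition strict_order :: "'a set \<Rightarrow> 'a rel \<Rightarrow> 'a rel" where
  "strict_order P le = {(p, q). p \<in> P \<and> q \<in> P \<and> (p, q) \<in> le \<and> p \<noteq> q}"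

definition suborders :: "'a set \<Rightarrow> 'a rel \<Rightarrow> 'a rel set" where
  "suborders P le = {R. R \<subseteq> strict_order P le \<and> trans R}"

definition order_scattered :: "'b set \<Rightarrow> 'b rel \<Rightarrow> bool" where
  "order_scattered A r \<longleftrightarrow>
     \<not> (\<exists>f :: rat \<Rightarrow> 'b. range f \<subseteq> A \<and> (\<forall>x y. (f x, f y) \<in> r \<longleftrightarrow> x \<le> y))"

definition inclusion_order :: "'b set set \<Rightarrow> 'b set rel" where
  "inclusion_order A = {(X, Y). X \<in> A \<and> Y \<in> A \<and> X \<subseteq> Y}"

end

theory Submission
  imports Defs "HOL-Library.Ramsey" "HOL-Library.Countable"
begin

lemma three_bad:
  assumes po: "partial_order_on P le"
    and S: "x \<in> strict_order P le" "y \<in> strict_order P le" "z \<in> strict_order P le"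
    and d: "x \<noteq> y" "x \<noteq> z" "y \<noteq> z"
    and c1: "\<exists>a b c. (a,b) \<in> {x,y} \<and> (b,c) \<in> {x,y}"
    and c2: "\<exists>a b c. (a,b) \<in> {x,z} \<and> (b,c) \<in> {x,z}"
    and c3: "\<exists>a b c. (a,b) \<in> {y,z} \<and> (b,c) \<in> {y,z}"
  shows False
proof -
  have tr: "trans le" and an: "antisym le"
    using po by (auto simp: partial_order_on_def preorder_on_def)
  obtain x1 x2 where x: "x = (x1,x2)" by fastforce
  obtain y1 y2 where y: "y = (y1,y2)" by fastforce
  obtain z1 z2 where z: "z = (z1,z2)" by fastforce
  have xs: "(x1,x2) \<in> le" "x1 \<noteq> x2" using S(1) x by (auto simp: strict_order_def)
  have ys: "(y1,y2) \<in> le" "y1 \<noteq> y2" using S(2) y by (auto simp: strict_order_def)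
  have zs: "(z1,z2) \<in> le" "z1 \<noteq> z2" using S(3) z by (auto simp: strict_order_def)
  have T: "\<And>a b c. (a,b) \<in> le \<Longrightarrow> (b,c) \<in> le \<Longrightarrow> (a,c) \<in> le" using tr by (meson transD)
  have A: "\<And>a b. (a,b) \<in> le \<Longrightarrow> (b,a) \<in> le \<Longrightarrow> a = b" using an by (meson antisymD)
  have e1: "x2 = y1 \<or> y2 = x1" using c1 x y xs ys by auto
  have e2: "x2 = z1 \<or> z2 = x1" using c2 x z xs zs by auto
  have e3: "y2 = z1 \<or> z2 = y1" using c3 y z ys zs by auto
  show False using e1 e2 e3 xs ys zs T A d x y z by metis
qed

lemma pos_dir:
  assumes po: "partial_order_on P le" and inf: "infinite (strict_order P le)"
  shows "\<not> order_scattered (suborders P le) (inclusion_order (suborders P le))"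
proof -
  let ?S = "strict_order P le"
  let ?col = "\<lambda>A::'a rel. if \<exists>a b c. (a,b) \<in> A \<and> (b,c) \<in> A then 1 else (0::nat)"
  obtain Y t where Y: "Y \<subseteq> ?S" "infinite Y" "t < 2"
    and hom: "\<forall>x\<in>Y. \<forall>y\<in>Y. x\<noteq>y \<longrightarrow> ?col {x, y} = t"
  proof -
    have "\<exists>Y t. Y \<subseteq> ?S \<and> infinite Y \<and> t < 2 \<and> (\<forall>x\<in>Y. \<forall>y\<in>Y. x\<noteq>y \<longrightarrow> ?col {x, y} = t)"
      by (rule Ramsey2[OF inf]) simp
    thus ?thesis using that by blast
  qed
  have t0: "t = 0"
  proof (rule ccontr)
    assume "t \<noteq> 0"
    hence t1: "t = 1" using Y(3) by auto
    obtain F where F: "F \<subseteq> Y" "card F = 3" "finite F"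
      using infinite_arbitrarily_large[OF Y(2)] by blast
    then obtain x y z where "F = {x,y,z}" "x \<noteq> y" "x \<noteq> z" "y \<noteq> z"
      by (metis card_3_iff)
    moreover have cc: "\<And>u v. u \<in> Y \<Longrightarrow> v \<in> Y \<Longrightarrow> u \<noteq> v \<Longrightarrow> \<exists>a b c. (a,b) \<in> {u,v} \<and> (b,c) \<in> {u,v}"
    proof -
      fix u v assume "u \<in> Y" "v \<in> Y" "u \<noteq> v"
      hence "?col {u,v} = 1" using hom t1 by blast
      thus "\<exists>a b c. (a,b) \<in> {u,v} \<and> (b,c) \<in> {u,v}" by (metis zero_neq_one)
    qed
    ultimately have xyz: "x \<in> Y" "y \<in> Y" "z \<in> Y" "x \<noteq> y" "x \<noteq> z" "y \<noteq> z" using F by auto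
    show False by (rule three_bad[OF po, of x y z]) (use xyz Y(1) cc in auto)
  qed
  have free: "\<And>a b c. (a,b) \<in> Y \<Longrightarrow> (b,c) \<in> Y \<Longrightarrow> False"
  proof -
    fix a b c assume ab: "(a,b) \<in> Y" and bc: "(b,c) \<in> Y"
    show False
    proof (cases "(a,b) = (b,c)")
      case True
      then have "a = b" by simp
      thus False using ab Y(1) by (auto simp: strict_order_def)
    next
      case False
      hence "?col {(a,b),(b,c)} = 0" using hom t0 ab bc by blast
      moreover have "?col {(a,b),(b,c)} = 1" by auto
      ultimately show False by simp
    qed
  qed
  obtain g :: "nat \<Rightarrow> 'a \<times> 'a" where g: "inj g" "range g \<subseteq> Y"
    using infinite_countable_subset[OF Y(2)] by blast
  define h where "h = g \<circ> (to_nat :: rat \<Rightarrow> nat)"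
  have hinj: "inj h" unfolding h_def using g(1) by (simp add: inj_compose)
  define f where "f q = h ` {r. r < q}" for q :: rat
  have fsub: "f q \<subseteq> Y" for q using g(2) unfolding f_def h_def by auto
  have fso: "f q \<in> suborders P le" for q
    unfolding suborders_def using fsub Y(1) free
    by (auto simp: trans_def) (meson subsetD)+
  have "(f x, f y) \<in> inclusion_order (suborders P le) \<longleftrightarrow> x \<le> y" for x y
  proof -
    have "f x \<subseteq> f y \<longleftrightarrow> {r. r < x} \<subseteq> {r. r < y}"
      unfolding f_def using hinj by (simp add: inj_image_subset_iff)
    also have "\<dots> \<longleftrightarrow> x \<le> y"
    proof
      assume "{r. r < x} \<subseteq> {r. r < y}"
      thus "x \<le> y" by (metis (mono_tags) leI less_irrefl mem_Collect_eq subsetD)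
    qed auto
    finally show ?thesis using fso by (auto simp: inclusion_order_def)
  qed
  thus ?thesis unfolding order_scattered_def using fso by blast
qed

lemma neg_dir:
  assumes fin: "finite (strict_order P le)"
  shows "order_scattered (suborders P le) (inclusion_order (suborders P le))"
  unfolding order_scattered_def
proof
  assume "\<exists>f :: rat \<Rightarrow> 'a rel. range f \<subseteq> suborders P le \<and>
     (\<forall>x y. (f x, f y) \<in> inclusion_order (suborders P le) \<longleftrightarrow> x \<le> y)"
  then obtain f :: "rat \<Rightarrow> 'a rel" where f: "range f \<subseteq> suborders P le"
    "\<And>x y. (f x, f y) \<in> inclusion_order (suborders P le) \<longleftrightarrow> x \<le> y" by blast
  have "inj f"
  proof (rule injI)
    fix x y assume "f x = f y"
    hence "x \<le> y" "y \<le> x" using f(1) f(2)[of x y] f(2)[of y x] by (auto simp: inclusion_order_def)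
    thus "x = y" by simp
  qed
  moreover have "finite (suborders P le)"
    using fin by (rule finite_subset[rotated, OF finite_Pow_iff[THEN iffD2]]) (auto simp: suborders_def)
  ultimately have "finite (UNIV :: rat set)"
    using f(1) by (meson finite_imageD finite_subset)
  thus False using infinite_UNIV_char_0 by blast
qed

theorem theorem6p2:
  fixes P :: "'a set" and le :: "'a rel"
  assumes "partial_order_on P le"
  shows "order_scattered (suborders P le) (inclusion_order (suborders P le))
         \<longleftrightarrow> finite (strict_order P le)"
  using pos_dir[OF assms] neg_dir by blast

end
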